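(* Suppose $2\le m\le n$. If $P_1,\dots,P_\ell$ are deterministic perfect channels from $\{1,\dots,m\}$ to $\{1,\dots,n\}$ such that at least one column of $P_1+\cdots+P_\ell$ has more than one nonzero entry, then $\{P_1,\dots,P_\ell\}$ is not $\mathcal{I}$-minimized.
   Context: Channels from $\{1,\dots,m\}$ to $\{1,\dots,n\}$ are $m\times n$ row-stochastic matrices; $\mathcal{D}$ is the set of deterministic (0-1) channels, $\mathrm{rank}(D)$ the matrix rank. A deterministic perfect channel is a deterministic channel of rank $\min(m,n)$. For a channel $W$, $\Lambda(W)=\{\lambda\text{ probability distribution on }\mathcal{D}: W=\sum_D\lambda_DD\}$, $C_{11}(\lambda)=\sum_D\lambda_D\log_2\mathrm{rank}(D)$, $\underline{C}_{11}(W)=\inf_{\lambda\in\Lambda(W)}C_{11}(\lambda)$. A subset $S\subseteq\mathcal{D}$ is $\mathcal{I}$-minimized if there is a probability distribution $\lambda$ on $\mathcal{D}$ with $\mathrm{supp}(\lambda)=S$ and $C_{11}(\lambda)=\underline{C}_{11}(W)$ where $W=\sum_D\lambda_DD$. *)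

theory Defs
  imports "HOL-Analysis.Analysis"
begin

text \<open>Channels from an input alphabet of size CARD('m) to an output alphabet of size
CARD('n) are represented as matrices of type real^'n^'m: row i (an input) is W $ i,
entry W $ i $ j is the probability of output j given input i.\<close>

definition channel :: "real^'n::finite^'m::finite \<Rightarrow> bool" where
  "channel W \<longleftrightarrow> (\<forall>i j. W $ i $ j \<ge> 0) \<and> (\<forall>i. (\<Sum>j\<in>UNIV. W $ i $ j) = 1)"

definition deterministic :: "real^'n::finite^'m::finite \<Rightarrow> bool" where
  "deterministic D \<longleftrightarrow> channel D \<and> (\<forall>i j. D $ i $ j = 0 \<or> D $ i $ j = 1)"

definition det_channels :: "(real^'n::finite^'m::finite) set" where
  "det_channels = {D. deterministic D}"

definition perfect :: "real^'n::finite^'m::finite \<Rightarrow> bool" where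
  "perfect D \<longleftrightarrow> deterministic D \<and> rank D = min CARD('m) CARD('n)"

definition is_distribution :: "(real^'n::finite^'m::finite \<Rightarrow> real) \<Rightarrow> bool" where
  "is_distribution lam \<longleftrightarrow> (\<forall>D. lam D \<ge> 0) \<and> (\<forall>D. D \<notin> det_channels \<longrightarrow> lam D = 0)
     \<and> (\<Sum>D\<in>det_channels. lam D) = 1"

definition supp :: "(real^'n::finite^'m::finite \<Rightarrow> real) \<Rightarrow> (real^'n^'m) set" where
  "supp lam = {D\<in>det_channels. lam D \<noteq> 0}"

definition mixture :: "(real^'n::finite^'m::finite \<Rightarrow> real) \<Rightarrow> real^'n^'m" where
  "mixture lam = (\<Sum>D\<in>det_channels. lam D *\<^sub>R D)"

definition Lambda :: "real^'n::finite^'m::finite \<Rightarrow> (real^'n^'m \<Rightarrow> real) set" where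
  "Lambda W = {lam. is_distribution lam \<and> mixture lam = W}"

definition C11 :: "(real^'n::finite^'m::finite \<Rightarrow> real) \<Rightarrow> real" where
  "C11 lam = (\<Sum>D\<in>det_channels. lam D * log 2 (real (rank D)))"

definition C11_lower :: "real^'n::finite^'m::finite \<Rightarrow> real" where
  "C11_lower W = (INF lam\<in>Lambda W. C11 lam)"

definition I_minimized :: "(real^'n::finite^'m::finite) set \<Rightarrow> bool" where
  "I_minimized S \<longleftrightarrow> (\<exists>lam. is_distribution lam \<and> supp lam = S \<and> C11 lam = C11_lower (mixture lam))"

end

theory Submission
  imports Defs
begin

lemma rank_dup:
  fixes A :: "real^'n::finite^'m::finite"
  assumes "i1 \<noteq> i2" "A $ i1 = A $ i2"
  shows "rank A < CARD('m)"
proof -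
  have sub: "rows A \<subseteq> (\<lambda>i. row i A) ` (UNIV - {i2})"
  proof
    fix x assume "x \<in> rows A"
    then obtain i where x: "x = row i A" by (auto simp: rows_def)
    show "x \<in> (\<lambda>i. row i A) ` (UNIV - {i2})"
    proof (cases "i = i2")
      case True
      then have "x = row i1 A" using x assms by (simp add: row_def)
      then show ?thesis using assms by auto
    qed (use x in auto)
  qed
  then have "card (rows A) \<le> card ((\<lambda>i. row i A) ` (UNIV - {i2}))"
    by (intro card_mono) auto
  also have "\<dots> \<le> card (UNIV - {i2::'m})"
    by (rule card_image_le) simp
  also have "\<dots> < CARD('m)" by (simp add: card_Diff_singleton)
  finally have "card (rows A) < CARD('m)" .
  moreover have "dim (rows A) \<le> card (rows A)"
    by (rule dim_le_card') (rule finite_subset[OF sub], simp)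
  ultimately show ?thesis by (simp add: row_rank_def)
qed

lemma det_row:
  fixes D :: "real^'n::finite^'m::finite"
  assumes "deterministic D" "D $ i $ j \<noteq> 0"
  shows "D $ i = (\<chi> k. if k = j then 1 else 0)"
proof -
  have nn: "\<forall>k. D $ i $ k \<ge> 0" and s: "(\<Sum>k\<in>UNIV. D $ i $ k) = 1" and b: "D $ i $ j = 1"
    using assms by (auto simp: deterministic_def channel_def)
  have "(\<Sum>k\<in>UNIV. D $ i $ k) = D $ i $ j + (\<Sum>k\<in>UNIV-{j}. D $ i $ k)"
    by (simp add: sum.remove)
  then have "(\<Sum>k\<in>UNIV-{j}. D $ i $ k) = 0" using s b by simp
  then have "\<forall>k\<in>UNIV-{j}. D $ i $ k = 0"
    using nn by (subst (asm) sum_nonneg_eq_0_iff) auto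
  then show ?thesis using b by (auto simp: vec_eq_iff)
qed

lemma finite_det: "finite (det_channels :: (real^'n::finite^'m::finite) set)"
proof -
  have "det_channels \<subseteq> range (\<lambda>f::'m\<Rightarrow>'n\<Rightarrow>bool. (\<chi> i j. if f i j then 1 else 0) :: real^'n^'m)"
  proof
    fix D :: "real^'n^'m" assume "D \<in> det_channels"
    then have "\<forall>i j. D $ i $ j = 0 \<or> D $ i $ j = 1" by (auto simp: det_channels_def deterministic_def)
    then have "D = (\<chi> i j. if D $ i $ j = 1 then 1 else 0)" by (auto simp: vec_eq_iff)
    then show "D \<in> range (\<lambda>f::'m\<Rightarrow>'n\<Rightarrow>bool. (\<chi> i j. if f i j then 1 else 0) :: real^'n^'m)"
      by (rule image_eqI[where x="\<lambda>i j. D $ i $ j = 1"]) (use \<open>D = _\<close> in simp_all)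
  qed
  then show ?thesis by (rule finite_subset) simp
qed

lemma sum_ind_scale:
  fixes S :: "(real^'n::finite^'m::finite) set"
  assumes "finite S" "X \<in> S"
  shows "(\<Sum>D\<in>S. (if D = X then c else 0) *\<^sub>R D) = c *\<^sub>R X"
proof -
  have "(\<Sum>D\<in>S. (if D = X then c else 0) *\<^sub>R D) = (\<Sum>D\<in>S. if D = X then c *\<^sub>R X else 0)"
    by (rule sum.cong) auto
  also have "\<dots> = c *\<^sub>R X" using assms by simp
  finally show ?thesis .
qed

lemma sum_ind_mult:
  assumes "finite S" "X \<in> S"
  shows "(\<Sum>D\<in>S. (if D = X then (c::real) else 0) * f D) = c * f X"
proof -
  have "(\<Sum>D\<in>S. (if D = X then c else 0) * f D) = (\<Sum>D\<in>S. if D = X then c * f X else 0)"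
    by (rule sum.cong) auto
  also have "\<dots> = c * f X" using assms by simp
  finally show ?thesis .
qed

lemma log_nat_nonneg: "0 \<le> log 2 (real (n::nat))"
  by (cases "n = 0") (auto simp: log_def)

lemma C11_nonneg: "is_distribution lam \<Longrightarrow> 0 \<le> C11 lam"
  unfolding C11_def is_distribution_def
  by (intro sum_nonneg mult_nonneg_nonneg) (auto simp: log_nat_nonneg)

lemma log_rank_less:
  assumes "r < c" "(2::nat) \<le> c"
  shows "log 2 (real r) < log 2 (real c)"
proof (cases "r = 0")
  case True
  have "log 2 (real c) > 0" using assms by simp
  then show ?thesis using True by (simp add: log_def)
next
  case False then show ?thesis using assms by simp
qed

lemma log_rank_le:
  assumes "r \<le> c" "(2::nat) \<le> c"
  shows "log 2 (real r) \<le> log 2 (real c)"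
proof (cases "r = 0")
  case True
  have "log 2 (real c) > 0" using assms by simp
  then show ?thesis using True by (simp add: log_def)
next
  case False then show ?thesis using assms by simp
qed

theorem proposition4:
  fixes P :: "nat \<Rightarrow> real^'n::finite^'m::finite" and l :: nat
  assumes "2 \<le> CARD('m)" and "CARD('m) \<le> CARD('n)"
    and "\<forall>k\<in>{1..l}. perfect (P k)"
    and "\<exists>j. card {i. (\<Sum>k=1..l. P k) $ i $ j \<noteq> 0} > 1"
  shows "\<not> I_minimized (P ` {1..l})"
proof
  assume "I_minimized (P ` {1..l})"
  then obtain lam where dist: "is_distribution lam" and sp: "supp lam = P ` {1..l}"
    and opt: "C11 lam = C11_lower (mixture lam)"
    unfolding I_minimized_def by blast
  obtain j where cj: "card {i. (\<Sum>k=1..l. P k) $ i $ j \<noteq> 0} > 1" using assms(4) by blast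
  define X where "X = {i. (\<Sum>k=1..l. P k) $ i $ j \<noteq> 0}"
  have "X \<noteq> {}" using cj X_def by auto
  then obtain i1 where i1: "i1 \<in> X" by blast
  have "card (X - {i1}) > 0" using cj i1 X_def by (simp add: card_Diff_singleton)
  then have "X - {i1} \<noteq> {}" by (metis card.empty less_irrefl)
  then obtain i2 where i2: "i2 \<in> X" "i2 \<noteq> i1" by blast
  have "(\<Sum>k=1..l. P k $ i1 $ j) \<noteq> 0" using i1 X_def by simp
  then obtain k1 where k1: "k1 \<in> {1..l}" "P k1 $ i1 $ j \<noteq> 0"
    using sum.not_neutral_contains_not_neutral by blast
  have "(\<Sum>k=1..l. P k $ i2 $ j) \<noteq> 0" using i2 X_def by simp
  then obtain k2 where k2: "k2 \<in> {1..l}" "P k2 $ i2 $ j \<noteq> 0"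
    using sum.not_neutral_contains_not_neutral by blast
  define A where "A = P k1"
  define B where "B = P k2"
  have pA: "perfect A" and pB: "perfect B" using assms(3) k1 k2 A_def B_def by auto
  have dA: "deterministic A" and dB: "deterministic B" using pA pB by (auto simp: perfect_def)
  have rA: "rank A = CARD('m)" and rB: "rank B = CARD('m)"
    using pA pB assms(2) by (auto simp: perfect_def)
  have Ai1: "A $ i1 = (\<chi> k. if k = j then 1 else 0)" using det_row[OF dA] k1 A_def by blast
  have Bi2: "B $ i2 = (\<chi> k. if k = j then 1 else 0)" using det_row[OF dB] k2 B_def by blast
  have AB: "A \<noteq> B"
  proof
    assume "A = B"
    then have "A $ i1 = A $ i2" using Ai1 Bi2 by simp
    then have "rank A < CARD('m)" using rank_dup i2(2) by metis
    then show False using rA by simp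
  qed
  define D1 :: "real^'n^'m" where "D1 = (\<chi> i. if i = i2 then B $ i else A $ i)"
  define D2 :: "real^'n^'m" where "D2 = (\<chi> i. if i = i2 then A $ i else B $ i)"
  have dD1: "deterministic D1" using dA dB
    unfolding D1_def deterministic_def channel_def by auto
  have dD2: "deterministic D2" using dA dB
    unfolding D2_def deterministic_def channel_def by auto
  have sumD: "D1 + D2 = A + B" by (auto simp: vec_eq_iff D1_def D2_def)
  have "D1 $ i1 = D1 $ i2" using Ai1 Bi2 i2(2) by (simp add: D1_def)
  then have rD1: "rank D1 < CARD('m)" using rank_dup i2(2) by metis
  have rD2: "rank D2 \<le> CARD('m)" using rank_bound[of D2] by simp
  define L where "L = log 2 (real CARD('m))"
  have lD1: "log 2 (real (rank D1)) < L" unfolding L_def using log_rank_less[OF rD1 assms(1)] .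
  have lD2: "log 2 (real (rank D2)) \<le> L" unfolding L_def using log_rank_le[OF rD2 assms(1)] .
  have inA: "A \<in> det_channels" and inB: "B \<in> det_channels" and inD1: "D1 \<in> det_channels"
    and inD2: "D2 \<in> det_channels" using dA dB dD1 dD2 by (auto simp: det_channels_def)
  have "A \<in> supp lam" "B \<in> supp lam" using sp k1 k2 A_def B_def by auto
  then have lAp: "lam A > 0" and lBp: "lam B > 0"
    using dist by (auto simp: supp_def is_distribution_def order_le_less)
  define e where "e = min (lam A) (lam B)"
  have e0: "e > 0" using lAp lBp by (simp add: e_def)
  define lam' where "lam' = (\<lambda>D. lam D + (if D = D1 then e else 0) + (if D = D2 then e else 0)
      - (if D = A then e else 0) - (if D = B then e else 0))"
  have fin: "finite (det_channels :: (real^'n^'m) set)" by (rule finite_det)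
  have dist': "is_distribution lam'"
  proof -
    have "\<forall>D. lam' D \<ge> 0"
    proof
      fix D
      have "lam D \<ge> 0" using dist by (simp add: is_distribution_def)
      then show "lam' D \<ge> 0" using AB e0 unfolding lam'_def e_def by auto
    qed
    moreover have "\<forall>D. D \<notin> det_channels \<longrightarrow> lam' D = 0"
      using dist inA inB inD1 inD2 unfolding lam'_def is_distribution_def by auto
    moreover have "(\<Sum>D\<in>det_channels. lam' D) = 1"
      using dist fin inA inB inD1 inD2 unfolding lam'_def is_distribution_def
      by (simp add: sum.distrib sum_subtractf)
    ultimately show ?thesis by (simp add: is_distribution_def)
  qed
  have mix': "mixture lam' = mixture lam"
  proof -
    have "mixture lam' = mixture lam + e *\<^sub>R D1 + e *\<^sub>R D2 - e *\<^sub>R A - e *\<^sub>R B"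
      unfolding mixture_def lam'_def
      by (simp add: scaleR_add_left scaleR_diff_left sum.distrib sum_subtractf
          sum_ind_scale[OF fin inA] sum_ind_scale[OF fin inB] sum_ind_scale[OF fin inD1]
          sum_ind_scale[OF fin inD2])
    also have "\<dots> = mixture lam + e *\<^sub>R (D1 + D2) - e *\<^sub>R (A + B)"
      by (simp add: scaleR_add_right algebra_simps)
    finally show ?thesis by (simp add: sumD)
  qed
  have C': "C11 lam' = C11 lam + e * log 2 (real (rank D1)) + e * log 2 (real (rank D2)) - e * L - e * L"
    unfolding C11_def lam'_def
    using rA rB
    by (simp add: ring_distribs sum.distrib sum_subtractf L_def
          sum_ind_mult[OF fin inA] sum_ind_mult[OF fin inB] sum_ind_mult[OF fin inD1]
          sum_ind_mult[OF fin inD2] del: mult_if_delta)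
  have "C11 lam' < C11 lam"
  proof -
    have "e * log 2 (real (rank D1)) < e * L" using e0 lD1 by simp
    moreover have "e * log 2 (real (rank D2)) \<le> e * L" using e0 lD2 by simp
    ultimately show ?thesis using C' by linarith
  qed
  moreover have "C11_lower (mixture lam) \<le> C11 lam'"
    unfolding C11_lower_def
  proof (rule cINF_lower)
    show "lam' \<in> Lambda (mixture lam)" using dist' mix' by (simp add: Lambda_def)
    show "bdd_below (C11 ` Lambda (mixture lam))"
      by (rule bdd_belowI[where m=0]) (auto simp: Lambda_def C11_nonneg)
  qed
  ultimately show False using opt by simp
qed

end
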